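(* Let $\mathfrak a$ be a Euclidean space of dimension $n$, $\Phi\subset\mathfrak a^*$ a (possibly non-reduced) root system with a chosen ordering, positive roots $\Phi^+$ and simple roots $\alpha_1,\dots,\alpha_n$; let $\omega_1,\dots,\omega_n\in\mathfrak a$ be defined by $\alpha_i(\omega_j)=\delta_{ij}$, let $\mathfrak a_+=\{\mathbf z\in\mathfrak a:\alpha_i(\mathbf z)\ge0\ \forall i\}$, and let $\rho=\sum_{\alpha\in\Phi^+}\alpha=\sum_{i=1}^nk_i\alpha_i$ (with $k_i>0$). Put $k=\min_{1\le i\le n}k_i/\|\omega_i\|$. Then there exist $C_1,C_2>0$ such that for all $z>0$, $$C_1\le\frac{\int_{\{\mathbf z\in\mathfrak a_+:\|\mathbf z\|\ge z\}}e^{-\rho(\mathbf z)}\,d\mathbf z}{e^{-kz}}\le C_2.$$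
   Context: $\|\cdot\|$ is the Euclidean norm on $\mathfrak a$ and $d\mathbf z$ is Lebesgue measure on $\mathfrak a$. *)

theory Defs
  imports "HOL-Analysis.Analysis"
begin

text \<open>We identify the dual space with the space itself via the inner product:
  a root \<alpha> acts on z as \<alpha> \<bullet> z.\<close>

definition root_system :: "'a::euclidean_space set \<Rightarrow> bool" where
  "root_system \<Phi> \<longleftrightarrow>
     finite \<Phi> \<and> 0 \<notin> \<Phi> \<and> span \<Phi> = UNIV \<and>
     (\<forall>\<alpha>\<in>\<Phi>. \<forall>\<beta>\<in>\<Phi>. \<beta> - (2 * (\<beta> \<bullet> \<alpha>) / (\<alpha> \<bullet> \<alpha>)) *\<^sub>R \<alpha> \<in> \<Phi>) \<and>
     (\<forall>\<alpha>\<in>\<Phi>. \<forall>\<beta>\<in>\<Phi>. 2 * (\<beta> \<bullet> \<alpha>) / (\<alpha> \<bullet> \<alpha>) \<in> \<int>)"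

text \<open>A base (set of simple roots) of \<Phi>, i.e. the datum of a chosen ordering:
  a basis of the space contained in \<Phi> such that every root is an integral
  combination of it with coefficients all \<ge> 0 or all \<le> 0.\<close>
definition root_base :: "'a::euclidean_space set \<Rightarrow> 'a set \<Rightarrow> bool" where
  "root_base \<Phi> \<Delta> \<longleftrightarrow>
     \<Delta> \<subseteq> \<Phi> \<and> independent \<Delta> \<and> span \<Delta> = UNIV \<and>
     (\<forall>\<beta>\<in>\<Phi>. \<exists>c::'a \<Rightarrow> int. \<beta> = (\<Sum>\<alpha>\<in>\<Delta>. of_int (c \<alpha>) *\<^sub>R \<alpha>) \<and>
                 ((\<forall>\<alpha>\<in>\<Delta>. c \<alpha> \<ge> 0) \<or> (\<forall>\<alpha>\<in>\<Delta>. c \<alpha> \<le> 0)))"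

definition positive_roots :: "'a::euclidean_space set \<Rightarrow> 'a set \<Rightarrow> 'a set" where
  "positive_roots \<Phi> \<Delta> =
     {\<beta>\<in>\<Phi>. \<exists>c::'a \<Rightarrow> real. \<beta> = (\<Sum>\<alpha>\<in>\<Delta>. c \<alpha> *\<^sub>R \<alpha>) \<and> (\<forall>\<alpha>\<in>\<Delta>. c \<alpha> \<ge> 0)}"

definition weyl_chamber :: "'a::euclidean_space set \<Rightarrow> 'a set" where
  "weyl_chamber \<Delta> = {z. \<forall>\<alpha>\<in>\<Delta>. \<alpha> \<bullet> z \<ge> 0}"

end

theory Submission
  imports Defs
begin

lemma ennreal_le_suminf: "(f i :: ennreal) \<le> (\<Sum>i. f i)"
  using sum_le_suminf[OF summableI, of "{i}" f] by simp

lemma pow_fact_le_exp: "0 \<le> (y::real) \<Longrightarrow> y ^ n / fact n \<le> exp y"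
proof -
  assume y: "0 \<le> y"
  have "(\<lambda>n. y^n /\<^sub>R fact n) sums exp y" by (rule exp_converges)
  hence "sum (\<lambda>n. y^n /\<^sub>R fact n) {n} \<le> exp y"
    using sum_le_suminf[of "\<lambda>n. y^n /\<^sub>R fact n" "{n}"] y by (auto simp: sums_iff)
  thus ?thesis by (simp add: divide_inverse mult.commute)
qed

lemma summable_poly_exp:
  fixes mu :: real
  assumes "0 < mu"
  shows "summable (\<lambda>m::nat. exp (- mu * m) * (real m + 1) ^ N)"
proof (rule summable_comparison_test)
  define K where "K = fact N * (2 / mu) ^ N * exp (mu / 2)"
  show "summable (\<lambda>m::nat. K * exp (- (mu/2)) ^ m)"
    using assms by (intro summable_mult summable_geometric) auto
  show "\<exists>N0. \<forall>m\<ge>N0. norm (exp (- mu * m) * (real m + 1) ^ N) \<le> K * exp (- (mu/2)) ^ m"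
  proof (intro exI allI impI)
    fix m :: nat
    have "(mu * (real m + 1) / 2) ^ N / fact N \<le> exp (mu * (real m + 1) / 2)"
      using assms by (intro pow_fact_le_exp) auto
    moreover have "(mu * (real m + 1) / 2) = (mu/2) * (real m + 1)" by simp
    ultimately have "(mu / 2) ^ N * (real m + 1) ^ N \<le> fact N * exp (mu * (real m + 1) / 2)"
      by (simp only: power_mult_distrib divide_le_eq fact_gt_zero mult.commute)
    hence "(real m + 1) ^ N \<le> fact N * (2 / mu) ^ N * exp (mu * (real m + 1) / 2)"
      using assms by (simp add: field_simps power_divide)
    hence "exp (- mu * m) * (real m + 1) ^ N \<le> exp (- mu * m) * (fact N * (2 / mu) ^ N * exp (mu * (real m + 1) / 2))"
      by (intro mult_left_mono) auto
    also have "\<dots> = K * exp (- (mu/2)) ^ m"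
      by (simp add: K_def exp_of_nat_mult[symmetric] mult_exp_exp[symmetric] algebra_simps)
         (simp add: exp_add[symmetric] field_simps)
    finally show "norm (exp (- mu * m) * (real m + 1) ^ N) \<le> K * exp (- (mu/2)) ^ m" by simp
  qed
qed

lemma ball_borel[measurable]: "ball (c::'a::euclidean_space) r \<in> sets borel"
  by (simp add: borel_open)

lemma shell:
  fixes mu :: real
  assumes "0 < mu"
  shows "(\<integral>\<^sup>+ x. ennreal (exp (- mu * norm (x::'a::euclidean_space))) \<partial>lborel) < \<infinity>"
proof -
  let ?V = "unit_ball_vol (real DIM('a))"
  have "(\<integral>\<^sup>+ x. ennreal (exp (- mu * norm (x::'a))) \<partial>lborel)
     \<le> (\<integral>\<^sup>+ x. (\<Sum>m. ennreal (exp (- mu * real m)) * indicator (ball (0::'a) (real m + 1)) x) \<partial>lborel)"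
  proof (rule nn_integral_mono)
    fix x :: 'a
    define m where "m = nat \<lfloor>norm x\<rfloor>"
    have fl: "0 \<le> \<lfloor>norm x\<rfloor>" by simp
    have m1: "real m \<le> norm x" "norm x < real m + 1"
      unfolding m_def using fl by (simp_all add: of_nat_nat)
    have "ennreal (exp (- mu * norm x)) \<le> ennreal (exp (- mu * real m)) * indicator (ball (0::'a) (real m + 1)) x"
      using m1 assms by (auto simp: dist_norm)
    also have "\<dots> \<le> (\<Sum>m. ennreal (exp (- mu * real m)) * indicator (ball (0::'a) (real m + 1)) x)"
      by (rule ennreal_le_suminf)
    finally show "ennreal (exp (- mu * norm x)) \<le> (\<Sum>m. ennreal (exp (- mu * real m)) * indicator (ball (0::'a) (real m + 1)) x)" .
  qed
  also have "\<dots> = (\<Sum>m. \<integral>\<^sup>+ x. ennreal (exp (- mu * real m)) * indicator (ball (0::'a) (real m + 1)) x \<partial>lborel)"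
    by (rule nn_integral_suminf) measurable
  also have "\<dots> = (\<Sum>m. ennreal (exp (- mu * real m) * (?V * (real m + 1) ^ DIM('a))))"
    by (subst nn_integral_cmult_indicator) (auto simp: emeasure_ball ennreal_mult)
  also have "\<dots> = ennreal (\<Sum>m. exp (- mu * real m) * (?V * (real m + 1) ^ DIM('a)))"
  proof (rule suminf_ennreal2)
    show "summable (\<lambda>m. exp (- mu * real m) * (?V * (real m + 1) ^ DIM('a)))"
      using summable_mult[OF summable_poly_exp[OF assms, of "DIM('a)"], of ?V]
      by (simp add: mult_ac)
  qed auto
  also have "\<dots> < \<infinity>" by simp
  finally show ?thesis .
qed

lemma nn_integral_translate:
  fixes g :: "'a::euclidean_space \<Rightarrow> ennreal"
  assumes "g \<in> borel_measurable borel"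
  shows "(\<integral>\<^sup>+ x. g (w + x) \<partial>lborel) = (\<integral>\<^sup>+ x. g x \<partial>lborel)"
proof -
  have "(\<integral>\<^sup>+ x. g x \<partial>lborel) = (\<integral>\<^sup>+ x. g x \<partial>(distr lborel borel ((+) w)))"
    by (simp add: lborel_distr_plus)
  also have "\<dots> = (\<integral>\<^sup>+ x. g (w + x) \<partial>lborel)"
    using assms by (subst nn_integral_distr) auto
  finally show ?thesis ..
qed


context
  fixes \<Delta> :: "'a::euclidean_space set" and \<omega> :: "'a \<Rightarrow> 'a"
    and kk :: "'a \<Rightarrow> real" and \<rho> :: 'a and k :: real
  assumes fin: "finite \<Delta>" and spn: "span \<Delta> = UNIV"
    and dual: "\<forall>\<alpha>\<in>\<Delta>. \<forall>\<beta>\<in>\<Delta>. \<alpha> \<bullet> \<omega> \<beta> = (if \<alpha> = \<beta> then 1 else 0)"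
    and rho_eq: "\<rho> = (\<Sum>\<alpha>\<in>\<Delta>. kk \<alpha> *\<^sub>R \<alpha>)"
    and kk_pos: "\<forall>\<alpha>\<in>\<Delta>. 0 < kk \<alpha>"
    and k_def: "k = Min ((\<lambda>\<alpha>. kk \<alpha> / norm (\<omega> \<alpha>)) ` \<Delta>)"
begin

lemma expand: "x = (\<Sum>\<alpha>\<in>\<Delta>. (\<alpha> \<bullet> x) *\<^sub>R \<omega> \<alpha>)"
proof -
  define y where "y = x - (\<Sum>\<alpha>\<in>\<Delta>. (\<alpha> \<bullet> x) *\<^sub>R \<omega> \<alpha>)"
  have "\<gamma> \<bullet> y = 0" if "\<gamma> \<in> \<Delta>" for \<gamma>
  proof -
    have "\<gamma> \<bullet> (\<Sum>\<alpha>\<in>\<Delta>. (\<alpha> \<bullet> x) *\<^sub>R \<omega> \<alpha>) = (\<Sum>\<alpha>\<in>\<Delta>. (\<alpha> \<bullet> x) * (\<gamma> \<bullet> \<omega> \<alpha>))"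
      by (simp add: inner_sum_right)
    also have "\<dots> = (\<Sum>\<alpha>\<in>\<Delta>. if \<alpha> = \<gamma> then \<gamma> \<bullet> x else 0)"
      using dual that by (intro sum.cong) auto
    also have "\<dots> = \<gamma> \<bullet> x" using fin that by simp
    finally show ?thesis by (simp add: y_def inner_diff_right)
  qed
  hence "orthogonal y y"
    using orthogonal_to_span[of y \<Delta> y] spn by (auto simp: orthogonal_def inner_commute)
  hence "y = 0" by (simp add: orthogonal_def)
  thus ?thesis by (simp add: y_def)
qed

lemma omega_nz: "\<alpha> \<in> \<Delta> \<Longrightarrow> \<omega> \<alpha> \<noteq> 0"
  using dual by force

lemma Delta_ne: "\<Delta> \<noteq> {}"
proof
  assume "\<Delta> = {}"
  hence "span \<Delta> = {0}" by simp
  obtain b :: 'a where b: "b \<in> Basis" using nonempty_Basis by blast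
  have "b \<in> span \<Delta>" using spn by simp
  with \<open>span \<Delta> = {0}\<close> b show False using nonzero_Basis by auto
qed


definition "pp \<alpha> x = norm (\<omega> \<alpha>) * (\<alpha> \<bullet> x)"
definition "SS x = (\<Sum>\<alpha>\<in>\<Delta>. pp \<alpha> x)"

lemma pp_nonneg: "x \<in> weyl_chamber \<Delta> \<Longrightarrow> \<alpha> \<in> \<Delta> \<Longrightarrow> 0 \<le> pp \<alpha> x"
  by (simp add: pp_def weyl_chamber_def)

lemma norm_le_SS: assumes "x \<in> weyl_chamber \<Delta>" shows "norm x \<le> SS x"
proof -
  have "norm x = norm (\<Sum>\<alpha>\<in>\<Delta>. (\<alpha> \<bullet> x) *\<^sub>R \<omega> \<alpha>)" using expand by metis
  also have "\<dots> \<le> (\<Sum>\<alpha>\<in>\<Delta>. norm ((\<alpha> \<bullet> x) *\<^sub>R \<omega> \<alpha>))" by (rule norm_sum)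
  also have "\<dots> = SS x" unfolding SS_def pp_def
    using assms by (intro sum.cong) (auto simp: weyl_chamber_def)
  finally show ?thesis .
qed

lemma cs_strict: assumes "a \<in> \<Delta>" "b \<in> \<Delta>" "a \<noteq> b"
  shows "\<omega> a \<bullet> \<omega> b < norm (\<omega> a) * norm (\<omega> b)"
proof -
  have "\<omega> a \<bullet> \<omega> b \<le> norm (\<omega> a) * norm (\<omega> b)" by (rule norm_cauchy_schwarz)
  moreover have "\<omega> a \<bullet> \<omega> b \<noteq> norm (\<omega> a) * norm (\<omega> b)"
  proof
    assume "\<omega> a \<bullet> \<omega> b = norm (\<omega> a) * norm (\<omega> b)"
    hence "norm (\<omega> a) *\<^sub>R \<omega> b = norm (\<omega> b) *\<^sub>R \<omega> a" by (simp add: norm_cauchy_schwarz_eq)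
    hence "a \<bullet> (norm (\<omega> a) *\<^sub>R \<omega> b) = a \<bullet> (norm (\<omega> b) *\<^sub>R \<omega> a)" by simp
    hence "norm (\<omega> b) = 0" using dual assms by simp
    thus False using omega_nz assms by simp
  qed
  ultimately show ?thesis by simp
qed

definition "gam = Max (insert 0 ((\<lambda>(a,b). (\<omega> a \<bullet> \<omega> b) / (norm (\<omega> a) * norm (\<omega> b))) ` {(a,b). a \<in> \<Delta> \<and> b \<in> \<Delta> \<and> a \<noteq> b}))"

lemma gam: "0 \<le> gam" "gam < 1"
  "a \<in> \<Delta> \<Longrightarrow> b \<in> \<Delta> \<Longrightarrow> a \<noteq> b \<Longrightarrow> \<omega> a \<bullet> \<omega> b \<le> gam * (norm (\<omega> a) * norm (\<omega> b))"
proof -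
  have f: "finite {(a,b). a \<in> \<Delta> \<and> b \<in> \<Delta> \<and> a \<noteq> b}"
    by (rule finite_subset[of _ "\<Delta> \<times> \<Delta>"]) (use fin in auto)
  show "0 \<le> gam" unfolding gam_def using f by (intro Max_ge) auto
  show "gam < 1" unfolding gam_def using f
  proof (subst Max_less_iff, goal_cases)
    case 3
    have "(\<omega> a \<bullet> \<omega> b) / (norm (\<omega> a) * norm (\<omega> b)) < 1" if "a \<in> \<Delta>" "b \<in> \<Delta>" "a \<noteq> b" for a b
      using cs_strict[OF that] omega_nz that by (simp add: divide_less_eq)
    then show ?case by auto
  qed auto
  assume ab: "a \<in> \<Delta>" "b \<in> \<Delta>" "a \<noteq> b"
  hence "(\<omega> a \<bullet> \<omega> b) / (norm (\<omega> a) * norm (\<omega> b)) \<le> gam"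
    unfolding gam_def using f by (intro Max_ge) auto
  thus "\<omega> a \<bullet> \<omega> b \<le> gam * (norm (\<omega> a) * norm (\<omega> b))"
    using omega_nz ab by (simp add: divide_le_eq)
qed

definition "cc = (1 - gam) / (real (card \<Delta>) + 1)"

lemma cc: "0 < cc" "cc \<le> 1"
  using gam unfolding cc_def by (auto simp: divide_le_eq)


lemma alg:
  fixes P R X g c N :: real
  assumes "0 \<le> P" "0 \<le> R" "R \<le> N * P" "0 \<le> X" "0 < c" "c \<le> 1" "c * (N + 1) \<le> 1 - g"
    and "X^2 \<le> P^2 + 2*g*P*R + R^2"
  shows "X \<le> P + (1 - c) * R"
proof -
  define A where "A = P * R"
  define B where "B = R * R"
  have h1: "c * B \<le> c * N * A"
  proof -
    have "R * R \<le> R * (N * P)" using assms by (intro mult_left_mono) auto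
    hence "c * (R * R) \<le> c * (R * (N * P))" using assms by (intro mult_left_mono) auto
    thus ?thesis by (simp add: A_def B_def mult_ac)
  qed
  have h2: "c * N * A + c * A \<le> A - g * A"
  proof -
    have "A * (c * (N + 1)) \<le> A * (1 - g)" using assms by (intro mult_left_mono) (auto simp: A_def)
    thus ?thesis by (simp add: algebra_simps)
  qed
  have h3: "0 \<le> c * c * B" by (simp add: B_def)
  have e: "(P + (1 - c) * R)^2 = P^2 + 2*A - 2*(c*A) + B - 2*(c*B) + c*c*B"
    by (simp add: A_def B_def power2_eq_square algebra_simps)
  have e2: "P^2 + 2*g*P*R + R^2 = P^2 + 2*(g*A) + B"
    by (simp add: A_def B_def power2_eq_square algebra_simps)
  have "P^2 + 2*g*P*R + R^2 \<le> (P + (1 - c) * R)^2"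
    unfolding e e2 using h1 h2 h3 by linarith
  hence "X^2 \<le> (P + (1 - c) * R)^2" using assms(8) by (rule_tac order_trans) 
  moreover have "0 \<le> P + (1 - c) * R" using assms(1,2,6) by simp
  ultimately show ?thesis by (rule power2_le_imp_le)
qed

lemma geom: assumes x: "x \<in> weyl_chamber \<Delta>"
  shows "\<exists>\<beta>\<in>\<Delta>. norm x \<le> pp \<beta> x + (1 - cc) * (SS x - pp \<beta> x)"
proof -
  have "Max ((\<lambda>\<alpha>. pp \<alpha> x) ` \<Delta>) \<in> (\<lambda>\<alpha>. pp \<alpha> x) ` \<Delta>"
    by (rule Max_in) (use fin Delta_ne in auto)
  then obtain \<beta> where b: "\<beta> \<in> \<Delta>" "pp \<beta> x = Max ((\<lambda>\<alpha>. pp \<alpha> x) ` \<Delta>)"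
    by force
  have bmax: "pp \<alpha> x \<le> pp \<beta> x" if "\<alpha> \<in> \<Delta>" for \<alpha> using b fin that by auto
  define t where "t = \<beta> \<bullet> x"
  define y where "y = (\<Sum>\<alpha>\<in>\<Delta>-{\<beta>}. (\<alpha> \<bullet> x) *\<^sub>R \<omega> \<alpha>)"
  define P where "P = pp \<beta> x"
  define R where "R = SS x - pp \<beta> x"
  have R: "R = (\<Sum>\<alpha>\<in>\<Delta>-{\<beta>}. pp \<alpha> x)" unfolding R_def SS_def
    using sum.remove[OF fin b(1), of "\<lambda>\<alpha>. pp \<alpha> x"] by simp
  have xe: "x = t *\<^sub>R \<omega> \<beta> + y"
    using expand[of x] sum.remove[OF fin b(1), of "\<lambda>\<alpha>. (\<alpha> \<bullet> x) *\<^sub>R \<omega> \<alpha>"] by (simp add: t_def y_def)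
  have t0: "0 \<le> t" using x b by (simp add: t_def weyl_chamber_def)
  have P0: "0 \<le> P" unfolding P_def by (rule pp_nonneg[OF x b(1)])
  have R0: "0 \<le> R" unfolding R using pp_nonneg x by (intro sum_nonneg) auto
  have Pt: "P = norm (\<omega> \<beta>) * t" by (simp add: P_def pp_def t_def)
  have ny: "norm y \<le> R"
  proof -
    have "norm y \<le> (\<Sum>\<alpha>\<in>\<Delta>-{\<beta>}. norm ((\<alpha> \<bullet> x) *\<^sub>R \<omega> \<alpha>))" unfolding y_def by (rule norm_sum)
    also have "\<dots> = R" unfolding R pp_def
      using x by (intro sum.cong) (auto simp: weyl_chamber_def)
    finally show ?thesis .
  qed
  have wy: "t * (\<omega> \<beta> \<bullet> y) \<le> gam * P * R"
  proof -
    have "t * (\<omega> \<beta> \<bullet> y) = (\<Sum>\<alpha>\<in>\<Delta>-{\<beta>}. t * (\<alpha> \<bullet> x) * (\<omega> \<beta> \<bullet> \<omega> \<alpha>))"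
      by (simp add: y_def inner_sum_right sum_distrib_left mult.assoc)
    also have "\<dots> \<le> (\<Sum>\<alpha>\<in>\<Delta>-{\<beta>}. t * (\<alpha> \<bullet> x) * (gam * (norm (\<omega> \<beta>) * norm (\<omega> \<alpha>))))"
    proof (intro sum_mono mult_left_mono)
      fix \<alpha> assume a: "\<alpha> \<in> \<Delta> - {\<beta>}"
      show "\<omega> \<beta> \<bullet> \<omega> \<alpha> \<le> gam * (norm (\<omega> \<beta>) * norm (\<omega> \<alpha>))" using gam(3)[of \<beta> \<alpha>] a b by auto
      show "0 \<le> t * (\<alpha> \<bullet> x)" using t0 a x by (auto simp: weyl_chamber_def)
    qed
    also have "\<dots> = gam * P * R" unfolding R Pt pp_def
      by (simp add: sum_distrib_left mult_ac)
    finally show ?thesis .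
  qed
  have RN: "R \<le> real (card \<Delta>) * P"
  proof -
    have "R \<le> (\<Sum>\<alpha>\<in>\<Delta>-{\<beta>}. P)" unfolding R P_def by (intro sum_mono bmax) auto
    also have "\<dots> = real (card (\<Delta> - {\<beta>})) * P" by simp
    also have "\<dots> \<le> real (card \<Delta>) * P" using P0 fin by (intro mult_right_mono) (auto intro: card_mono)
    finally show ?thesis .
  qed
  have "(norm x)^2 = (t * norm (\<omega> \<beta>))^2 + 2 * (t * (\<omega> \<beta> \<bullet> y)) + (norm y)^2"
  proof -
    have "(norm x)^2 = x \<bullet> x" by (simp add: power2_norm_eq_inner)
    also have "\<dots> = t * t * (\<omega> \<beta> \<bullet> \<omega> \<beta>) + 2 * (t * (\<omega> \<beta> \<bullet> y)) + y \<bullet> y"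
      unfolding xe by (simp add: inner_add_left inner_add_right inner_commute algebra_simps)
    also have "\<dots> = (t * norm (\<omega> \<beta>))^2 + 2 * (t * (\<omega> \<beta> \<bullet> y)) + (norm y)^2"
      by (simp add: dot_square_norm power2_eq_square algebra_simps)
    finally show ?thesis .
  qed
  also have "\<dots> \<le> P^2 + 2*gam*P*R + R^2"
  proof -
    have "2*(t*(\<omega> \<beta> \<bullet> y)) \<le> 2*gam*P*R" using wy by simp
    moreover have "(norm y)^2 \<le> R^2" by (rule power_mono) (use ny in auto)
    moreover have "(t * norm (\<omega> \<beta>))^2 = P^2" by (simp add: Pt mult.commute)
    ultimately show ?thesis by linarith
  qed
  finally have "(norm x)^2 \<le> P^2 + 2*gam*P*R + R^2" .
  have ccN: "cc * (real (card \<Delta>) + 1) \<le> 1 - gam"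
  proof -
    have "real (card \<Delta>) + 1 > 0" by simp
    then show ?thesis unfolding cc_def by simp
  qed
  have "norm x \<le> P + (1 - cc) * R"
    by (rule alg[OF P0 R0 RN norm_ge_zero cc(1) cc(2) ccN \<open>(norm x)^2 \<le> P^2 + 2*gam*P*R + R^2\<close>])
  thus ?thesis using b(1) unfolding P_def R_def by blast
qed


lemma k_pos: "0 < k"
proof -
  have "0 < Min ((\<lambda>\<alpha>. kk \<alpha> / norm (\<omega> \<alpha>)) ` \<Delta>)"
    using fin Delta_ne kk_pos omega_nz by (subst Min_gr_iff) auto
  thus ?thesis using k_def by simp
qed

lemma kk_ge: assumes "\<alpha> \<in> \<Delta>" shows "k * norm (\<omega> \<alpha>) \<le> kk \<alpha>"
proof -
  have "k \<le> kk \<alpha> / norm (\<omega> \<alpha>)" unfolding k_def using fin assms by (intro Min_le) auto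
  thus ?thesis using omega_nz[OF assms] by (simp add: le_divide_eq)
qed

lemma rho_inner: "\<rho> \<bullet> x = (\<Sum>\<alpha>\<in>\<Delta>. kk \<alpha> * (\<alpha> \<bullet> x))"
  by (simp add: rho_eq inner_sum_left)

lemma rho_ge: assumes "x \<in> weyl_chamber \<Delta>" shows "k * SS x \<le> \<rho> \<bullet> x"
proof -
  have "k * SS x = (\<Sum>\<alpha>\<in>\<Delta>. (k * norm (\<omega> \<alpha>)) * (\<alpha> \<bullet> x))"
    by (simp add: SS_def pp_def sum_distrib_left mult_ac)
  also have "\<dots> \<le> (\<Sum>\<alpha>\<in>\<Delta>. kk \<alpha> * (\<alpha> \<bullet> x))"
    using assms kk_ge by (intro sum_mono mult_right_mono) (auto simp: weyl_chamber_def)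
  finally show ?thesis by (simp add: rho_inner)
qed

lemma D_borel[measurable]: "weyl_chamber \<Delta> \<in> sets borel"
proof -
  have "weyl_chamber \<Delta> = (\<Inter>\<alpha>\<in>\<Delta>. {x. \<alpha> \<bullet> x \<ge> 0})" by (auto simp: weyl_chamber_def)
  also have "closed \<dots>" using closed_halfspace_ge[of 0] by (intro closed_INT) (auto simp: inner_commute)
  finally show ?thesis by (rule borel_closed)
qed

lemma pp_meas[measurable]: "pp \<alpha> \<in> borel_measurable borel"
  unfolding pp_def[abs_def] by measurable

lemma SS_meas[measurable]: "SS \<in> borel_measurable borel"
  unfolding SS_def[abs_def] by measurable

definition "EE \<beta> m z = {x \<in> weyl_chamber \<Delta>. real m \<le> SS x - pp \<beta> x \<and> z - (1 - cc) * (real m + 1) \<le> pp \<beta> x}"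

lemma EE_borel[measurable]: "EE \<beta> m z \<in> sets borel"
proof -
  have "EE \<beta> m z = {x \<in> space borel. x \<in> weyl_chamber \<Delta> \<and> real m \<le> SS x - pp \<beta> x \<and> z - (1 - cc) * (real m + 1) \<le> pp \<beta> x}"
    by (auto simp: EE_def)
  also have "\<dots> \<in> sets borel" by measurable
  finally show ?thesis .
qed

lemma cover:
  assumes "x \<in> weyl_chamber \<Delta>" "z \<le> norm x"
  shows "\<exists>\<beta>\<in>\<Delta>. \<exists>m. x \<in> EE \<beta> m z"
proof -
  obtain \<beta> where b: "\<beta> \<in> \<Delta>" and nb: "norm x \<le> pp \<beta> x + (1 - cc) * (SS x - pp \<beta> x)"
    using geom[OF assms(1)] by blast
  have R0: "0 \<le> SS x - pp \<beta> x"
    using sum.remove[OF fin b, of "\<lambda>\<alpha>. pp \<alpha> x"] pp_nonneg[OF assms(1)]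
    by (simp add: SS_def) (intro sum_nonneg, auto)
  define m where "m = nat \<lfloor>SS x - pp \<beta> x\<rfloor>"
  have m1: "real m \<le> SS x - pp \<beta> x" "SS x - pp \<beta> x < real m + 1"
    unfolding m_def using R0 by (simp_all add: of_nat_nat)
  have "(1 - cc) * (SS x - pp \<beta> x) \<le> (1 - cc) * (real m + 1)"
    using cc m1 by (intro mult_left_mono) auto
  hence "z - (1 - cc) * (real m + 1) \<le> pp \<beta> x" using nb assms(2) by linarith
  thus ?thesis using b m1 assms(1) unfolding EE_def by blast
qed

lemma term_bound:
  assumes b: "\<beta> \<in> \<Delta>"
  shows "(\<integral>\<^sup>+ x. ennreal (exp (- k * SS x)) * indicator (EE \<beta> m z) x \<partial>lborel)
    \<le> ennreal (exp (- k * z) * exp (k * (1 - cc)) * exp (- (k * cc / 2)) ^ m)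
       * (\<integral>\<^sup>+ x. ennreal (exp (- (k * cc / 2) * norm (x::'a))) \<partial>lborel)"
proof -
  define mu where "mu = k * cc / 2"
  define th where "th = k - mu"
  define s where "s = max 0 (z - (1 - cc) * (real m + 1))"
  define w where "w = (s / norm (\<omega> \<beta>)) *\<^sub>R \<omega> \<beta>"
  have nb: "norm (\<omega> \<beta>) > 0" using omega_nz[OF b] by simp
  have mu0: "0 \<le> mu" "mu \<le> k" using k_pos cc by (auto simp: mu_def)
  have th0: "0 \<le> th" using mu0 by (simp add: th_def)
  have s0: "0 \<le> s" by (simp add: s_def)
  have inner_w: "\<alpha> \<bullet> w = (if \<alpha> = \<beta> then s / norm (\<omega> \<beta>) else 0)" if "\<alpha> \<in> \<Delta>" for \<alpha>
    using dual that b by (simp add: w_def)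
  have pp_shift: "pp \<alpha> (x - w) = pp \<alpha> x - (if \<alpha> = \<beta> then s else 0)" if "\<alpha> \<in> \<Delta>" for \<alpha> x
    using inner_w[OF that] nb by (auto simp: pp_def inner_diff_right algebra_simps)
  have SS_shift: "SS (x - w) = SS x - s" for x
  proof -
    have "SS (x - w) = (\<Sum>\<alpha>\<in>\<Delta>. pp \<alpha> x - (if \<alpha> = \<beta> then s else 0))"
      unfolding SS_def by (rule sum.cong[OF refl]) (erule pp_shift)
    also have "\<dots> = SS x - s" using fin b by (simp add: sum_subtractf SS_def)
    finally show ?thesis .
  qed
  have pw: "ennreal (exp (- k * SS x)) * indicator (EE \<beta> m z) x
      \<le> ennreal (exp (- k * s - th * real m)) * ennreal (exp (- mu * norm (x - w)))" for x
  proof (cases "x \<in> EE \<beta> m z")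
    case False thus ?thesis by simp
  next
    case True
    hence xD: "x \<in> weyl_chamber \<Delta>" and xm: "real m \<le> SS x - pp \<beta> x"
      and xz: "z - (1 - cc) * (real m + 1) \<le> pp \<beta> x" by (auto simp: EE_def)
    have ps: "s \<le> pp \<beta> x" using xz pp_nonneg[OF xD b] by (simp add: s_def)
    define x' where "x' = x - w"
    have x'D: "x' \<in> weyl_chamber \<Delta>"
      unfolding weyl_chamber_def
    proof safe
      fix \<alpha> assume a: "\<alpha> \<in> \<Delta>"
      show "0 \<le> \<alpha> \<bullet> x'"
      proof (cases "\<alpha> = \<beta>")
        case True
        have "s / norm (\<omega> \<beta>) \<le> \<beta> \<bullet> x" using ps nb by (simp add: pp_def divide_le_eq mult.commute)
        thus ?thesis using True inner_w[OF a] by (simp add: x'_def inner_diff_right)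
      next
        case False thus ?thesis using inner_w[OF a] xD a by (simp add: x'_def inner_diff_right weyl_chamber_def)
      qed
    qed
    have nx': "norm x' \<le> SS x'" by (rule norm_le_SS[OF x'D])
    have Sx': "SS x = s + SS x'" by (simp add: x'_def SS_shift)
    have R': "SS x' - pp \<beta> x' = SS x - pp \<beta> x" by (simp add: x'_def SS_shift pp_shift[OF b])
    have pb': "0 \<le> pp \<beta> x'" by (rule pp_nonneg[OF x'D b])
    have "k * SS x' = k * pp \<beta> x' + th * (SS x' - pp \<beta> x') + mu * (SS x' - pp \<beta> x')"
      by (simp add: th_def algebra_simps)
    also have "\<dots> \<ge> mu * pp \<beta> x' + th * real m + mu * (SS x' - pp \<beta> x')"
      using mu0 pb' th0 xm R' by (intro add_mono mult_right_mono mult_left_mono) auto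
    finally have "k * SS x' \<ge> th * real m + mu * SS x'" by (simp add: algebra_simps)
    moreover have "mu * norm x' \<le> mu * SS x'" using nx' mu0 by (intro mult_left_mono) auto
    ultimately have "- k * SS x \<le> - k * s - th * real m - mu * norm x'"
      using Sx' by (simp add: algebra_simps)
    hence "exp (- k * SS x) \<le> exp (- k * s - th * real m) * exp (- mu * norm x')"
      by (simp add: exp_add[symmetric])
    thus ?thesis using True by (simp add: x'_def ennreal_mult'[symmetric])
  qed
  have "(\<integral>\<^sup>+ x. ennreal (exp (- k * SS x)) * indicator (EE \<beta> m z) x \<partial>lborel)
      \<le> (\<integral>\<^sup>+ x. ennreal (exp (- k * s - th * real m)) * ennreal (exp (- mu * norm (x - w))) \<partial>lborel)"
    by (intro nn_integral_mono pw)
  also have "\<dots> = ennreal (exp (- k * s - th * real m)) * (\<integral>\<^sup>+ x. ennreal (exp (- mu * norm (x - w))) \<partial>lborel)"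
    by (rule nn_integral_cmult) measurable
  also have "(\<integral>\<^sup>+ x. ennreal (exp (- mu * norm (x - w))) \<partial>lborel) = (\<integral>\<^sup>+ x. ennreal (exp (- mu * norm (x::'a))) \<partial>lborel)"
    using nn_integral_translate[where g = "\<lambda>x. ennreal (exp (- mu * norm x))" and w="-w"] by simp
  also have "exp (- k * s - th * real m) \<le> exp (- k * z) * exp (k * (1 - cc)) * exp (- (k * cc / 2)) ^ m"
  proof -
    have "z - (1 - cc) * (real m + 1) \<le> s" by (simp add: s_def)
    hence "- k * s \<le> - k * (z - (1 - cc) * (real m + 1))" using k_pos by simp
    hence "- k * s - th * real m \<le> - k * z + k * (1 - cc) + real m * (- (k * cc / 2))"
      by (simp add: th_def mu_def algebra_simps)
    hence "exp (- k * s - th * real m) \<le> exp (- k * z + k * (1 - cc) + real m * (- (k * cc / 2)))"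
      by simp
    also have "\<dots> = exp (- k * z) * exp (k * (1 - cc)) * exp (real m * (- (k * cc / 2)))"
      by (simp only: exp_add)
    also have "\<dots> = exp (- k * z) * exp (k * (1 - cc)) * exp (- (k * cc / 2)) ^ m"
      by (simp only: exp_of_nat_mult)
    finally show ?thesis .
  qed
  hence "ennreal (exp (- k * s - th * real m)) * (\<integral>\<^sup>+ x. ennreal (exp (- mu * norm (x::'a))) \<partial>lborel)
      \<le> ennreal (exp (- k * z) * exp (k * (1 - cc)) * exp (- (k * cc / 2)) ^ m) * (\<integral>\<^sup>+ x. ennreal (exp (- mu * norm (x::'a))) \<partial>lborel)"
    by (intro mult_right_mono ennreal_leI) auto
  finally show ?thesis by (simp add: mu_def)
qed

lemma upper: "\<exists>C2>0. \<forall>z. (\<integral>\<^sup>+ x. ennreal (indicator {x \<in> weyl_chamber \<Delta>. norm x \<ge> z} x *\<^sub>R exp (- (\<rho> \<bullet> x))) \<partial>lborel)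
    \<le> ennreal (C2 * exp (- k * z))"
proof -
  define mu where "mu = k * cc / 2"
  have mu0: "0 < mu" using k_pos cc by (simp add: mu_def)
  define Q where "Q = (\<integral>\<^sup>+ x. ennreal (exp (- mu * norm (x::'a))) \<partial>lborel)"
  have "Q < \<infinity>" unfolding Q_def by (rule shell[OF mu0])
  then obtain Q' where Q': "0 \<le> Q'" "Q = ennreal Q'" by (auto simp: less_top_ennreal)
  define r where "r = exp (- mu)"
  have r: "0 < r" "r < 1" using mu0 by (auto simp: r_def)
  define E0 where "E0 = exp (k * (1 - cc))"
  define C2 where "C2 = real (card \<Delta>) * E0 * (Q' + 1) / (1 - r)"
  have C2: "0 < C2" using r Q' Delta_ne fin by (auto simp: C2_def E0_def card_gt_0_iff)
  show ?thesis
  proof (intro exI[of _ C2] conjI allI C2)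
    fix z :: real
    define B where "B = exp (- k * z) * E0"
    have B0: "0 \<le> B" by (simp add: B_def E0_def)
    let ?A = "{x \<in> weyl_chamber \<Delta>. norm x \<ge> z}"
    let ?T = "\<lambda>\<beta> m x. ennreal (exp (- k * SS x)) * indicator (EE \<beta> m z) x"
    have "(\<integral>\<^sup>+ x. ennreal (indicator ?A x *\<^sub>R exp (- (\<rho> \<bullet> x))) \<partial>lborel)
        \<le> (\<integral>\<^sup>+ x. (\<Sum>\<beta>\<in>\<Delta>. (\<Sum>m. ?T \<beta> m x)) \<partial>lborel)"
    proof (rule nn_integral_mono)
      fix x :: 'a
      show "ennreal (indicator ?A x *\<^sub>R exp (- (\<rho> \<bullet> x))) \<le> (\<Sum>\<beta>\<in>\<Delta>. (\<Sum>m. ?T \<beta> m x))"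
      proof (cases "x \<in> ?A")
        case False thus ?thesis by simp
      next
        case True
        hence xD: "x \<in> weyl_chamber \<Delta>" and xz: "z \<le> norm x" by auto
        obtain \<beta> m where b: "\<beta> \<in> \<Delta>" and xE: "x \<in> EE \<beta> m z" using cover[OF xD xz] by blast
        have "ennreal (indicator ?A x *\<^sub>R exp (- (\<rho> \<bullet> x))) = ennreal (exp (- (\<rho> \<bullet> x)))"
          using True by simp
        also have "\<dots> \<le> ennreal (exp (- k * SS x))"
          using rho_ge[OF xD] by (intro ennreal_leI) simp
        also have "\<dots> = ?T \<beta> m x" using xE by simp
        also have "\<dots> \<le> (\<Sum>m. ?T \<beta> m x)" by (rule ennreal_le_suminf)
        also have "\<dots> \<le> (\<Sum>\<beta>\<in>\<Delta>. (\<Sum>m. ?T \<beta> m x))"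
          by (rule member_le_sum[OF b _ fin]) simp
        finally show ?thesis .
      qed
    qed
    also have "\<dots> = (\<Sum>\<beta>\<in>\<Delta>. (\<Sum>m. \<integral>\<^sup>+ x. ?T \<beta> m x \<partial>lborel))"
    proof (subst nn_integral_sum)
      show "(\<Sum>\<beta>\<in>\<Delta>. \<integral>\<^sup>+ x. (\<Sum>m. ?T \<beta> m x) \<partial>lborel) = (\<Sum>\<beta>\<in>\<Delta>. (\<Sum>m. \<integral>\<^sup>+ x. ?T \<beta> m x \<partial>lborel))"
        by (intro sum.cong refl nn_integral_suminf) measurable
    qed measurable
    also have "\<dots> \<le> (\<Sum>\<beta>\<in>\<Delta>. (\<Sum>m. ennreal (B * Q' * r ^ m)))"
    proof (intro sum_mono suminf_le summableI)
      fix \<beta> m assume b: "\<beta> \<in> \<Delta>"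
      have "(\<integral>\<^sup>+ x. ?T \<beta> m x \<partial>lborel) \<le> ennreal (exp (- k * z) * exp (k * (1 - cc)) * exp (- (k * cc / 2)) ^ m) * Q"
        using term_bound[OF b, of m z] by (simp add: Q_def mu_def)
      also have "\<dots> = ennreal (B * Q' * r ^ m)"
        using Q' B0 r by (simp add: B_def E0_def r_def mu_def ennreal_mult'[symmetric] mult_ac)
      finally show "(\<integral>\<^sup>+ x. ?T \<beta> m x \<partial>lborel) \<le> ennreal (B * Q' * r ^ m)" .
    qed
    also have "\<dots> = (\<Sum>\<beta>\<in>\<Delta>. ennreal (B * Q' / (1 - r)))"
    proof (rule sum.cong[OF refl])
      fix \<beta>
      have s: "summable (\<lambda>m. B * Q' * r ^ m)" using r by (intro summable_mult summable_geometric) auto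
      have "(\<Sum>m. ennreal (B * Q' * r ^ m)) = ennreal (\<Sum>m. B * Q' * r ^ m)"
        using s B0 Q' r by (intro suminf_ennreal2) auto
      also have "(\<Sum>m. B * Q' * r ^ m) = B * Q' / (1 - r)"
        using r by (subst suminf_mult) (auto simp: suminf_geometric summable_geometric)
      finally show "(\<Sum>m. ennreal (B * Q' * r ^ m)) = ennreal (B * Q' / (1 - r))" .
    qed
    also have "\<dots> = ennreal (real (card \<Delta>) * (B * Q' / (1 - r)))"
    proof -
      have nn: "0 \<le> B * Q' / (1 - r)" using B0 Q' r by simp
      have "(\<Sum>\<beta>\<in>\<Delta>. ennreal (B * Q' / (1 - r))) = of_nat (card \<Delta>) * ennreal (B * Q' / (1 - r))"
        by (rule sum_constant)
      also have "\<dots> = ennreal (real (card \<Delta>)) * ennreal (B * Q' / (1 - r))"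
        by (simp only: ennreal_of_nat_eq_real_of_nat)
      also have "\<dots> = ennreal (real (card \<Delta>) * (B * Q' / (1 - r)))"
        by (rule ennreal_mult[symmetric]) (use nn in auto)
      finally show ?thesis .
    qed
    also have "\<dots> \<le> ennreal (C2 * exp (- k * z))"
    proof (intro ennreal_leI)
      have "B * Q' / (1 - r) \<le> B * (Q' + 1) / (1 - r)"
        using B0 r by (intro divide_right_mono mult_left_mono) auto
      hence "real (card \<Delta>) * (B * Q' / (1 - r)) \<le> real (card \<Delta>) * (B * (Q' + 1) / (1 - r))"
        by (intro mult_left_mono) auto
      also have "\<dots> = C2 * exp (- k * z)" by (simp add: C2_def B_def)
      finally show "real (card \<Delta>) * (B * Q' / (1 - r)) \<le> C2 * exp (- k * z)" .
    qed
    finally show "(\<integral>\<^sup>+ x. ennreal (indicator ?A x *\<^sub>R exp (- (\<rho> \<bullet> x))) \<partial>lborel) \<le> ennreal (C2 * exp (- k * z))" .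
  qed
qed

lemma lower: "\<exists>C1>0. \<forall>z>0. ennreal (C1 * exp (- k * z)) \<le>
    (\<integral>\<^sup>+ x. ennreal (indicator {x \<in> weyl_chamber \<Delta>. norm x \<ge> z} x *\<^sub>R exp (- (\<rho> \<bullet> x))) \<partial>lborel)"
proof -
  have "Min ((\<lambda>\<alpha>. kk \<alpha> / norm (\<omega> \<alpha>)) ` \<Delta>) \<in> (\<lambda>\<alpha>. kk \<alpha> / norm (\<omega> \<alpha>)) ` \<Delta>"
    by (rule Min_in) (use fin Delta_ne in auto)
  then obtain \<alpha>0 where a0: "\<alpha>0 \<in> \<Delta>" and ka0: "k = kk \<alpha>0 / norm (\<omega> \<alpha>0)"
    using k_def by auto
  define n0 where "n0 = norm (\<omega> \<alpha>0)"
  have n0: "0 < n0" using omega_nz[OF a0] by (simp add: n0_def)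
  define u where "u = (1 / n0) *\<^sub>R \<omega> \<alpha>0"
  have nu: "norm u = 1" using n0 by (simp add: u_def n0_def)
  have au: "\<alpha> \<bullet> u = (if \<alpha> = \<alpha>0 then 1 / n0 else 0)" if "\<alpha> \<in> \<Delta>" for \<alpha>
    using dual that a0 by (simp add: u_def)
  have au0: "0 \<le> \<alpha> \<bullet> u" if "\<alpha> \<in> \<Delta>" for \<alpha> using au[OF that] n0 by simp
  have rhou: "\<rho> \<bullet> u = k"
  proof -
    have "\<rho> \<bullet> u = (\<Sum>\<alpha>\<in>\<Delta>. kk \<alpha> * (if \<alpha> = \<alpha>0 then 1 / n0 else 0))"
      unfolding rho_inner by (rule sum.cong[OF refl]) (simp add: au)
    also have "\<dots> = kk \<alpha>0 / n0" using fin a0 by (simp add: if_distrib cong: if_cong)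
    finally show ?thesis using ka0 by (simp add: n0_def)
  qed
  define c0 where "c0 = (\<Sum>\<alpha>\<in>\<Delta>. \<omega> \<alpha>)"
  have ac0: "\<alpha> \<bullet> c0 = 1" if "\<alpha> \<in> \<Delta>" for \<alpha>
  proof -
    have "\<alpha> \<bullet> c0 = (\<Sum>\<beta>\<in>\<Delta>. if \<alpha> = \<beta> then 1 else 0)"
      unfolding c0_def inner_sum_right using dual that by (intro sum.cong) auto
    also have "\<dots> = 1" using fin that by simp
    finally show ?thesis .
  qed
  define Mx where "Mx = (\<Sum>\<alpha>\<in>\<Delta>. norm \<alpha>)"
  have Mx0: "0 \<le> Mx" unfolding Mx_def by (intro sum_nonneg) auto
  define r0 where "r0 = 1 / (1 + Mx)"
  have r0: "0 < r0" "Mx * r0 \<le> 1" using Mx0 by (auto simp: r0_def field_simps)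
  have ballD: "y \<in> weyl_chamber \<Delta>" if "y \<in> ball c0 r0" for y
    unfolding weyl_chamber_def
  proof safe
    fix \<alpha> assume a: "\<alpha> \<in> \<Delta>"
    have na: "norm \<alpha> \<le> Mx" unfolding Mx_def by (rule member_le_sum[OF a _ fin]) auto
    have d: "norm (y - c0) < r0" using that by (simp add: dist_norm norm_minus_commute)
    have "- (\<alpha> \<bullet> (y - c0)) \<le> norm \<alpha> * norm (y - c0)"
      using norm_cauchy_schwarz[of \<alpha> "-(y - c0)"] by (simp only: inner_minus_right norm_minus_cancel)
    also have "\<dots> \<le> Mx * r0" using na d Mx0 by (intro mult_mono) auto
    finally have "- (\<alpha> \<bullet> (y - c0)) \<le> 1" using r0 by linarith
    thus "0 \<le> \<alpha> \<bullet> y" using ac0[OF a] by (simp add: inner_diff_right)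
  qed
  define R0 where "R0 = norm c0 + r0"
  define Cst where "Cst = norm \<rho> * R0 + k * R0"
  define V where "V = unit_ball_vol (real DIM('a))"
  have V: "0 < V" by (simp add: V_def)
  define C1 where "C1 = exp (- Cst) * (V * r0 ^ DIM('a))"
  have C1: "0 < C1" using V r0 by (simp add: C1_def)
  show ?thesis
  proof (intro exI[of _ C1] conjI allI impI C1)
    fix z :: real assume z: "0 < z"
    let ?A = "{x \<in> weyl_chamber \<Delta>. norm x \<ge> z}"
    define v where "v = (z + R0) *\<^sub>R u + c0"
    have pw: "ennreal (exp (- k * z - Cst)) * indicator (ball v r0) x
        \<le> ennreal (indicator ?A x *\<^sub>R exp (- (\<rho> \<bullet> x)))" for x
    proof (cases "x \<in> ball v r0")
      case False thus ?thesis by simp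
    next
      case True
      define y where "y = x - (z + R0) *\<^sub>R u"
      have xy: "x = (z + R0) *\<^sub>R u + y" by (simp add: y_def)
      have yb: "y \<in> ball c0 r0" using True by (simp add: y_def v_def dist_norm algebra_simps)
      have ny: "norm y \<le> R0"
      proof -
        have "norm y \<le> norm c0 + norm (y - c0)" using norm_triangle_ineq[of c0 "y - c0"] by simp
        also have "norm (y - c0) < r0" using yb by (simp add: dist_norm norm_minus_commute)
        finally show ?thesis by (simp add: R0_def)
      qed
      have R0pos: "0 \<le> R0" using r0 by (simp add: R0_def)
      have xD: "x \<in> weyl_chamber \<Delta>"
        unfolding weyl_chamber_def
      proof safe
        fix \<alpha> assume a: "\<alpha> \<in> \<Delta>"
        have "0 \<le> (z + R0) * (\<alpha> \<bullet> u)" using z R0pos au0[OF a] by simp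
        moreover have "0 \<le> \<alpha> \<bullet> y" using ballD[OF yb] a by (simp add: weyl_chamber_def)
        ultimately show "0 \<le> \<alpha> \<bullet> x" unfolding xy by (simp add: inner_add_right)
      qed
      have "norm ((z + R0) *\<^sub>R u) \<le> norm x + norm y"
        using norm_triangle_ineq4[of x y] by (simp add: y_def)
      hence xz: "z \<le> norm x" using nu z R0pos ny by simp
      have "\<rho> \<bullet> y \<le> norm \<rho> * norm y" by (rule norm_cauchy_schwarz)
      also have "\<dots> \<le> norm \<rho> * R0" using ny by (intro mult_left_mono) auto
      finally have "\<rho> \<bullet> x \<le> k * z + Cst"
        unfolding xy Cst_def by (simp add: inner_add_right rhou algebra_simps)
      hence "exp (- k * z - Cst) \<le> exp (- (\<rho> \<bullet> x))" by simp
      thus ?thesis using True xD xz by simp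
    qed
    have "ennreal (C1 * exp (- k * z)) = ennreal (exp (- k * z - Cst)) * emeasure lborel (ball v r0)"
      using V r0 by (simp add: emeasure_ball C1_def V_def ennreal_mult'[symmetric] exp_diff exp_minus field_simps)
    also have "\<dots> = (\<integral>\<^sup>+ x. ennreal (exp (- k * z - Cst)) * indicator (ball v r0) x \<partial>lborel)"
      by (rule nn_integral_cmult_indicator[symmetric]) simp
    also have "\<dots> \<le> (\<integral>\<^sup>+ x. ennreal (indicator ?A x *\<^sub>R exp (- (\<rho> \<bullet> x))) \<partial>lborel)"
      by (intro nn_integral_mono pw)
    finally show "ennreal (C1 * exp (- k * z)) \<le> (\<integral>\<^sup>+ x. ennreal (indicator ?A x *\<^sub>R exp (- (\<rho> \<bullet> x))) \<partial>lborel)" .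
  qed
qed

lemma two_sided: "\<exists>C1 C2. C1 > 0 \<and> C2 > 0 \<and>
     (\<forall>z::real. z > 0 \<longrightarrow>
        C1 \<le> (LINT x:{x \<in> weyl_chamber \<Delta>. norm x \<ge> z}|lborel. exp (- (\<rho> \<bullet> x))) / exp (- k * z) \<and>
        (LINT x:{x \<in> weyl_chamber \<Delta>. norm x \<ge> z}|lborel. exp (- (\<rho> \<bullet> x))) / exp (- k * z) \<le> C2)"
proof -
  obtain C1 where C1: "C1 > 0" and lo: "\<And>z. z > 0 \<Longrightarrow> ennreal (C1 * exp (- k * z)) \<le>
    (\<integral>\<^sup>+ x. ennreal (indicator {x \<in> weyl_chamber \<Delta>. norm x \<ge> z} x *\<^sub>R exp (- (\<rho> \<bullet> x))) \<partial>lborel)"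
    using lower by blast
  obtain C2 where C2: "C2 > 0" and up: "\<And>z. (\<integral>\<^sup>+ x. ennreal (indicator {x \<in> weyl_chamber \<Delta>. norm x \<ge> z} x *\<^sub>R exp (- (\<rho> \<bullet> x))) \<partial>lborel)
    \<le> ennreal (C2 * exp (- k * z))"
    using upper by blast
  have key: "C1 \<le> (LINT x:{x \<in> weyl_chamber \<Delta>. norm x \<ge> z}|lborel. exp (- (\<rho> \<bullet> x))) / exp (- k * z) \<and>
        (LINT x:{x \<in> weyl_chamber \<Delta>. norm x \<ge> z}|lborel. exp (- (\<rho> \<bullet> x))) / exp (- k * z) \<le> C2"
    if z: "0 < z" for z
  proof -
    define A where "A = {x \<in> weyl_chamber \<Delta>. norm x \<ge> z}"
    have A[measurable]: "A \<in> sets borel"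
    proof -
      have "A = {x \<in> space borel. x \<in> weyl_chamber \<Delta> \<and> z \<le> norm x}" by (auto simp: A_def)
      also have "\<dots> \<in> sets borel" by measurable
      finally show ?thesis .
    qed
    define N where "N = (\<integral>\<^sup>+ x. ennreal (indicator A x *\<^sub>R exp (- (\<rho> \<bullet> x))) \<partial>lborel)"
    have I: "(LINT x:A|lborel. exp (- (\<rho> \<bullet> x))) = enn2real N"
      unfolding set_lebesgue_integral_def N_def
      by (rule integral_eq_nn_integral) auto
    have Nup: "N \<le> ennreal (C2 * exp (- k * z))" using up[of z] by (simp add: N_def A_def)
    have Nlo: "ennreal (C1 * exp (- k * z)) \<le> N" using lo[OF z] by (simp add: N_def A_def)
    have "N < top" using Nup le_less_trans[OF Nup ennreal_less_top] by simp
    hence NN: "N = ennreal (enn2real N)" by simp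
    have e: "0 < exp (- k * z)" by simp
    have "enn2real N \<le> C2 * exp (- k * z)" using Nup C2 e
      by (subst (asm) NN) (simp add: ennreal_le_iff)
    moreover have "C1 * exp (- k * z) \<le> enn2real N" using Nlo C1 e
      by (subst (asm) NN) (simp add: ennreal_le_iff enn2real_nonneg)
    ultimately show ?thesis
      using I e by (simp add: A_def le_divide_eq divide_le_eq)
  qed
  show ?thesis using C1 C2 key by blast
qed

end

theorem lemma5p6:
  fixes \<Phi> \<Delta> :: "'a::euclidean_space set"
    and \<omega> :: "'a \<Rightarrow> 'a" and kk :: "'a \<Rightarrow> real" and \<rho> :: 'a and k :: real
  assumes "root_system \<Phi>"
    and "root_base \<Phi> \<Delta>"
    and "\<forall>\<alpha>\<in>\<Delta>. \<forall>\<beta>\<in>\<Delta>. \<alpha> \<bullet> \<omega> \<beta> = (if \<alpha> = \<beta> then 1 else 0)"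
    and "\<rho> = (\<Sum>\<beta>\<in>positive_roots \<Phi> \<Delta>. \<beta>)"
    and "\<rho> = (\<Sum>\<alpha>\<in>\<Delta>. kk \<alpha> *\<^sub>R \<alpha>)"
    and "k = Min ((\<lambda>\<alpha>. kk \<alpha> / norm (\<omega> \<alpha>)) ` \<Delta>)"
  shows "\<exists>C1 C2. C1 > 0 \<and> C2 > 0 \<and>
     (\<forall>z::real. z > 0 \<longrightarrow>
        C1 \<le> (LINT x:{x \<in> weyl_chamber \<Delta>. norm x \<ge> z}|lborel. exp (- (\<rho> \<bullet> x))) / exp (- k * z) \<and>
        (LINT x:{x \<in> weyl_chamber \<Delta>. norm x \<ge> z}|lborel. exp (- (\<rho> \<bullet> x))) / exp (- k * z) \<le> C2)"
proof -
  have finP: "finite \<Phi>" using assms(1) by (simp add: root_system_def)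
  have sub: "\<Delta> \<subseteq> \<Phi>" and spn: "span \<Delta> = UNIV" using assms(2) by (auto simp: root_base_def)
  have fin: "finite \<Delta>" using finite_subset[OF sub finP] .
  define P where "P = positive_roots \<Phi> \<Delta>"
  have finPP: "finite P" unfolding P_def positive_roots_def using finP by simp
  have kk_pos: "\<forall>\<alpha>\<in>\<Delta>. 0 < kk \<alpha>"
  proof
    fix \<alpha> assume a: "\<alpha> \<in> \<Delta>"
    have "\<rho> \<bullet> \<omega> \<alpha> = (\<Sum>\<gamma>\<in>\<Delta>. kk \<gamma> * (\<gamma> \<bullet> \<omega> \<alpha>))"
      using assms(5) by (simp add: inner_sum_left)
    also have "\<dots> = (\<Sum>\<gamma>\<in>\<Delta>. if \<gamma> = \<alpha> then kk \<alpha> else 0)"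
      using assms(3) a by (intro sum.cong) auto
    also have "\<dots> = kk \<alpha>" using fin a by simp
    finally have kr: "kk \<alpha> = \<rho> \<bullet> \<omega> \<alpha>" ..
    have nn: "0 \<le> \<beta> \<bullet> \<omega> \<alpha>" if bP: "\<beta> \<in> P" for \<beta>
    proof -
      obtain c where c: "\<beta> = (\<Sum>\<gamma>\<in>\<Delta>. c \<gamma> *\<^sub>R \<gamma>)" "\<forall>\<gamma>\<in>\<Delta>. c \<gamma> \<ge> 0"
        using bP by (auto simp: P_def positive_roots_def)
      have "\<beta> \<bullet> \<omega> \<alpha> = (\<Sum>\<gamma>\<in>\<Delta>. c \<gamma> * (\<gamma> \<bullet> \<omega> \<alpha>))" using c(1) by (simp add: inner_sum_left)
      also have "\<dots> = (\<Sum>\<gamma>\<in>\<Delta>. if \<gamma> = \<alpha> then c \<alpha> else 0)"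
        using assms(3) a by (intro sum.cong) auto
      also have "\<dots> = c \<alpha>" using fin a by simp
      finally show ?thesis using c(2) a by simp
    qed
    have aP: "\<alpha> \<in> P"
    proof -
      have "(\<Sum>\<gamma>\<in>\<Delta>. (if \<gamma> = \<alpha> then 1 else 0) *\<^sub>R \<gamma>) = (\<Sum>\<gamma>\<in>\<Delta>. if \<gamma> = \<alpha> then \<alpha> else 0)"
        by (intro sum.cong) auto
      also have "\<dots> = \<alpha>" using fin a by simp
      finally have "(\<Sum>\<gamma>\<in>\<Delta>. (if \<gamma> = \<alpha> then 1 else 0) *\<^sub>R \<gamma>) = \<alpha>" .
      thus ?thesis unfolding P_def positive_roots_def using a sub
        by (auto intro!: exI[of _ "\<lambda>\<gamma>. if \<gamma> = \<alpha> then 1 else 0"])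
    qed
    have "\<rho> \<bullet> \<omega> \<alpha> = (\<Sum>\<beta>\<in>P. \<beta> \<bullet> \<omega> \<alpha>)" using assms(4) by (simp add: P_def inner_sum_left)
    also have "\<dots> \<ge> \<alpha> \<bullet> \<omega> \<alpha>" by (rule member_le_sum[OF aP _ finPP]) (use nn in auto)
    finally have "1 \<le> \<rho> \<bullet> \<omega> \<alpha>" using assms(3) a by simp
    thus "0 < kk \<alpha>" using kr by simp
  qed
  show ?thesis
    by (rule two_sided[OF fin spn assms(3) assms(5) kk_pos assms(6)])
qed

end
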